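(* Let $v,u$ be integrable functions on $[0,\infty)$ and let $z_1,z_2,\gamma_1,\gamma_2$ be integrable functions on $[0,\infty)$ such that $$z_1(x)\le v(x)\le z_2(x)\quad\text{and}\quad \gamma_1(x)\le u(x)\le\gamma_2(x)\quad\text{for all }x\in[0,\infty).$$ Then for all $x>0$, $\alpha>0$, $\delta>0$, $\rho>0$ and $\beta,\lambda,\eta,k\in\mathbb{R}$, writing $A f=\,{}^{\rho}\mathcal{J}^{\alpha,\beta}_{\eta,k}f(x)$, $D f=\,{}^{\rho}\mathcal{J}^{\delta,\lambda}_{\eta,k}f(x)$, $\Lambda_1=\Lambda^{\rho,\beta}_{x,k}(\alpha,\eta)$, $\Lambda_2=\Lambda^{\rho,\lambda}_{x,k}(\delta,\eta)$, $$\Big|\Lambda_2\,A(uv)+\Lambda_1\,D(vu)-Du\,Av-Dv\,Au\Big|\le\sqrt{K(v,z_1,z_2)\,K(u,\gamma_1,\gamma_2)},$$ where for functions $\varphi,\psi,\omega$, $$\begin{aligned}K(\varphi,\psi,\omega)={}&(D\omega-D\varphi)(A\varphi-A\psi)+(D\varphi-D\psi)(A\omega-A\varphi)\\ &-D\omega\,A\varphi-D\varphi\,A\omega-D\varphi\,A\psi-D\psi\,A\varphi+D\omega\,A\psi+D\psi\,A\omega\\ &+\Lambda_2\big[A(\psi\varphi)+A(\omega\varphi)-A(\psi\omega)\big]+\Lambda_1\big[D(\psi\varphi)+D(\omega\varphi)-D(\psi\omega)\big].\end{aligned}$$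
   Context: For a function $f$ on $[0,\infty)$, $x>0$, $\alpha>0$, $\rho>0$ and $\beta,\eta,k\in\mathbb{R}$, the generalized Katugampola fractional integral is $${}^{\rho}\mathcal{J}^{\alpha,\beta}_{\eta,k}f(x)=\frac{\rho^{1-\beta}x^{k}}{\Gamma(\alpha)}\int_0^x\frac{\tau^{\rho(\eta+1)-1}}{(x^\rho-\tau^\rho)^{1-\alpha}}f(\tau)\,d\tau,$$ defined whenever the integral exists; all such integrals appearing are assumed to exist. The operator applied to a product of functions means applied to the pointwise product. Also $$\Lambda^{\rho,\beta}_{x,k}(\alpha,\eta)=\frac{\Gamma(\eta+1)}{\Gamma(\eta+\alpha+1)}\rho^{-\beta}x^{k+\rho(\eta+\alpha)}.$$ *)

theory Defs
  imports "HOL-Analysis.Analysis"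
begin

definition kat_kernel :: "real \<Rightarrow> real \<Rightarrow> real \<Rightarrow> real \<Rightarrow> real \<Rightarrow> real" where
  "kat_kernel \<rho> \<alpha> \<eta> x \<tau> =
     \<tau> powr (\<rho> * (\<eta> + 1) - 1) / (x powr \<rho> - \<tau> powr \<rho>) powr (1 - \<alpha>)"

definition kat_J :: "real \<Rightarrow> real \<Rightarrow> real \<Rightarrow> real \<Rightarrow> real \<Rightarrow> (real \<Rightarrow> real) \<Rightarrow> real \<Rightarrow> real" where
  "kat_J \<rho> \<alpha> \<beta> \<eta> k f x =
     \<rho> powr (1 - \<beta>) * x powr k / Gamma \<alpha> *
     (LINT \<tau>:{0<..<x}|lborel. kat_kernel \<rho> \<alpha> \<eta> x \<tau> * f \<tau>)"

definition kat_exists :: "real \<Rightarrow> real \<Rightarrow> real \<Rightarrow> (real \<Rightarrow> real) \<Rightarrow> real \<Rightarrow> bool" where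
  "kat_exists \<rho> \<alpha> \<eta> f x =
     set_integrable lborel {0<..<x} (\<lambda>\<tau>. kat_kernel \<rho> \<alpha> \<eta> x \<tau> * f \<tau>)"

definition kat_Lambda :: "real \<Rightarrow> real \<Rightarrow> real \<Rightarrow> real \<Rightarrow> real \<Rightarrow> real \<Rightarrow> real" where
  "kat_Lambda \<rho> \<beta> x k \<alpha> \<eta> =
     Gamma (\<eta> + 1) / Gamma (\<eta> + \<alpha> + 1) * \<rho> powr (- \<beta>) * x powr (k + \<rho> * (\<eta> + \<alpha>))"

definition kat_K :: "((real \<Rightarrow> real) \<Rightarrow> real) \<Rightarrow> ((real \<Rightarrow> real) \<Rightarrow> real) \<Rightarrow> real \<Rightarrow> real
    \<Rightarrow> (real \<Rightarrow> real) \<Rightarrow> (real \<Rightarrow> real) \<Rightarrow> (real \<Rightarrow> real) \<Rightarrow> real" where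
  "kat_K A D L1 L2 \<phi> \<psi> \<omega> =
     (D \<omega> - D \<phi>) * (A \<phi> - A \<psi>) + (D \<phi> - D \<psi>) * (A \<omega> - A \<phi>)
     - D \<omega> * A \<phi> - D \<phi> * A \<omega> - D \<phi> * A \<psi> - D \<psi> * A \<phi> + D \<omega> * A \<psi> + D \<psi> * A \<omega>
     + L2 * (A (\<lambda>t. \<psi> t * \<phi> t) + A (\<lambda>t. \<omega> t * \<phi> t) - A (\<lambda>t. \<psi> t * \<omega> t))
     + L1 * (D (\<lambda>t. \<psi> t * \<phi> t) + D (\<lambda>t. \<omega> t * \<phi> t) - D (\<lambda>t. \<psi> t * \<omega> t))"

end

theory Submission
  imports Defs
begin


lemma discr:
  fixes p q r :: real
  assumes "r \<ge> 0" "\<And>t. 0 \<le> p + 2*q*t + r*t^2"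
  shows "q^2 \<le> p*r"
proof (cases "r = 0")
  case True
  show ?thesis
  proof (rule ccontr)
    assume "\<not> ?thesis"
    then have "q \<noteq> 0" using True by auto
    have "0 \<le> p + 2*q*(-(p+1)/(2*q)) + r*(-(p+1)/(2*q))^2" by (rule assms(2))
    also have "\<dots> = -1" using True \<open>q \<noteq> 0\<close> by (simp add: field_simps)
    finally show False by simp
  qed
next
  case False
  then have r: "r > 0" using assms(1) by simp
  have "0 \<le> p + 2*q*(-q/r) + r*(-q/r)^2" by (rule assms(2))
  also have "\<dots> = p - q^2/r" using r by (simp add: field_simps power2_eq_square)
  finally have "q^2/r \<le> p" by simp
  then show ?thesis using r by (simp add: field_simps)
qed

lemma amgm_aux:
  fixes a d X Y p q :: real
  assumes "a \<ge> 0" "d \<ge> 0" "X \<ge> 0" "Y \<ge> 0" "p^2 \<le> a*X" "q^2 \<le> d*Y"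
  shows "2*p*q \<le> d*X + a*Y"
proof -
  have "(2*p*q)^2 = 4*p^2*q^2" by (simp add: power2_eq_square)
  also have "\<dots> \<le> 4*(a*X)*(d*Y)"
    using assms by (intro mult_mono mult_left_mono) auto
  also have "\<dots> \<le> (d*X + a*Y)^2"
    using sum_squares_ge_zero[of "d*X - a*Y" 0]
    by (simp add: power2_eq_square algebra_simps)
  finally have "(2*p*q)^2 \<le> (d*X + a*Y)^2" .
  moreover have "d*X + a*Y \<ge> 0" using assms by simp
  ultimately have "\<bar>2*p*q\<bar> \<le> d*X + a*Y"
    using abs_le_square_iff power2_abs by (metis abs_of_nonneg)
  then show ?thesis by simp
qed

definition P :: "(real \<Rightarrow> real) \<Rightarrow> real set \<Rightarrow> (real \<Rightarrow> real) \<Rightarrow> real" where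
  "P W S f = (LINT t:S|lborel. W t * f t)"
definition ok :: "(real \<Rightarrow> real) \<Rightarrow> real set \<Rightarrow> (real \<Rightarrow> real) \<Rightarrow> bool" where
  "ok W S f = set_integrable lborel S (\<lambda>t. W t * f t)"

lemma ok_add: "ok W S f \<Longrightarrow> ok W S g \<Longrightarrow> ok W S (\<lambda>t. f t + g t)"
  unfolding ok_def by (simp add: distrib_left)
lemma P_add: "ok W S f \<Longrightarrow> ok W S g \<Longrightarrow> P W S (\<lambda>t. f t + g t) = P W S f + P W S g"
  unfolding ok_def P_def by (simp add: distrib_left)
lemma ok_scale: "ok W S f \<Longrightarrow> ok W S (\<lambda>t. c * f t)"
  unfolding ok_def by (simp add: mult.left_commute[of _ c])
lemma P_scale: "P W S (\<lambda>t. c * f t) = c * P W S f"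
  unfolding P_def by (simp add: mult.left_commute[of _ c])
lemma ok_cong: "(\<And>t. t \<in> S \<Longrightarrow> f t = g t) \<Longrightarrow> ok W S f = ok W S g"
  unfolding ok_def by (rule set_integrable_cong) auto
lemma P_cong: "(\<And>t. t \<in> S \<Longrightarrow> f t = g t) \<Longrightarrow> P W S f = P W S g"
proof -
  assume a: "\<And>t. t \<in> S \<Longrightarrow> f t = g t"
  have "(\<lambda>x. indicator S x *\<^sub>R (W x * f x)) = (\<lambda>x. indicator S x *\<^sub>R (W x * g x))"
    using a by (auto simp: indicator_def)
  then show ?thesis unfolding P_def set_lebesgue_integral_def by simp
qed
lemma P_mono: "(\<And>t. W t \<ge> 0) \<Longrightarrow> ok W S f \<Longrightarrow> ok W S g \<Longrightarrow> (\<And>t. t \<in> S \<Longrightarrow> f t \<le> g t) \<Longrightarrow> P W S f \<le> P W S g"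
  unfolding ok_def P_def by (rule set_integral_mono) (auto intro: mult_left_mono)
lemma P_nonneg: "(\<And>t. W t \<ge> 0) \<Longrightarrow> (\<And>t. t \<in> S \<Longrightarrow> 0 \<le> f t) \<Longrightarrow> 0 \<le> P W S f"
  unfolding P_def set_lebesgue_integral_def
  by (rule Bochner_Integration.integral_nonneg) (auto simp: indicator_def)

lemma CS:
  assumes W: "\<And>t. W t \<ge> 0" and o: "ok W S (\<lambda>t. 1)" "ok W S f" "ok W S (\<lambda>t. f t * f t)"
  shows "(P W S f)^2 \<le> P W S (\<lambda>t. 1) * P W S (\<lambda>t. f t * f t)"
proof -
  have "(-(P W S f))^2 \<le> P W S (\<lambda>t. f t * f t) * P W S (\<lambda>t. 1)"
  proof (rule discr)
    show "0 \<le> P W S (\<lambda>t. 1)" using P_nonneg[OF W] by simp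
    fix c :: real
    have e: "P W S (\<lambda>t. (f t - c)^2) = P W S (\<lambda>t. (f t * f t + (-2*c) * f t) + c^2 * 1)"
      by (rule P_cong) (simp add: power2_eq_square algebra_simps)
    also have "\<dots> = P W S (\<lambda>t. f t * f t + (-2*c) * f t) + P W S (\<lambda>t. c^2 * 1)"
      using o by (intro P_add ok_add ok_scale) auto
    also have "\<dots> = P W S (\<lambda>t. f t * f t) + P W S (\<lambda>t. (-2*c) * f t) + P W S (\<lambda>t. c^2 * 1)"
      using o ok_scale[OF o(2), of "-2*c"] by (subst P_add) auto
    also have "\<dots> = P W S (\<lambda>t. f t * f t) + 2 * (-P W S f) * c + P W S (\<lambda>t. 1) * c^2"
      by (simp only: P_scale) simp
    finally have eq: "P W S (\<lambda>t. (f t - c)^2) = P W S (\<lambda>t. f t * f t) + 2 * (-P W S f) * c + P W S (\<lambda>t. 1) * c^2" .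
    have "0 \<le> P W S (\<lambda>t. (f t - c)^2)" by (rule P_nonneg) (use W in auto)
    then show "0 \<le> P W S (\<lambda>t. f t * f t) + 2 * (-P W S f) * c + P W S (\<lambda>t. 1) * c^2"
      using eq by simp
  qed
  then show ?thesis by (simp add: mult.commute)
qed

lemma sq_expand:
  assumes "ok W S (\<lambda>s. u s * u s)" "ok W S (\<lambda>s. u s * v s)" "ok W S (\<lambda>s. v s * v s)"
  shows "ok W S (\<lambda>s. (u s + t * v s) * (u s + t * v s))"
    "P W S (\<lambda>s. (u s + t * v s) * (u s + t * v s)) =
     P W S (\<lambda>s. u s * u s) + 2 * t * P W S (\<lambda>s. u s * v s) + t^2 * P W S (\<lambda>s. v s * v s)"
proof -
  have c: "\<And>s. (u s + t * v s) * (u s + t * v s) = (u s * u s + (2*t) * (u s * v s)) + t^2 * (v s * v s)"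
    by (simp add: power2_eq_square algebra_simps)
  have o1: "ok W S (\<lambda>s. u s * u s + (2*t) * (u s * v s))"
    using assms by (intro ok_add ok_scale)
  have o2: "ok W S (\<lambda>s. t^2 * (v s * v s))" using assms by (intro ok_scale)
  show "ok W S (\<lambda>s. (u s + t * v s) * (u s + t * v s))"
    unfolding c using ok_add[OF o1 o2] .
  show "P W S (\<lambda>s. (u s + t * v s) * (u s + t * v s)) =
     P W S (\<lambda>s. u s * u s) + 2 * t * P W S (\<lambda>s. u s * v s) + t^2 * P W S (\<lambda>s. v s * v s)"
    unfolding c using assms o1 o2 by (simp add: P_add P_scale ok_scale)
qed

lemma lin_expand:
  assumes "ok W S u" "ok W S v"
  shows "ok W S (\<lambda>s. u s + t * v s)" "P W S (\<lambda>s. u s + t * v s) = P W S u + t * P W S v"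
  using assms by (simp_all add: ok_add ok_scale P_add P_scale)

definition H where
  "H Wa Wd S f g = P Wd S (\<lambda>t. 1) * P Wa S (\<lambda>t. f t * g t) + P Wa S (\<lambda>t. 1) * P Wd S (\<lambda>t. f t * g t)
     - P Wd S f * P Wa S g - P Wd S g * P Wa S f"

lemma H_psd:
  assumes "\<And>t. Wa t \<ge> 0" "\<And>t. Wd t \<ge> 0"
    "ok Wa S (\<lambda>t. 1)" "ok Wa S w" "ok Wa S (\<lambda>t. w t * w t)"
    "ok Wd S (\<lambda>t. 1)" "ok Wd S w" "ok Wd S (\<lambda>t. w t * w t)"
  shows "0 \<le> H Wa Wd S w w"
proof -
  have "2 * P Wa S w * P Wd S w \<le> P Wd S (\<lambda>t. 1) * P Wa S (\<lambda>t. w t * w t) + P Wa S (\<lambda>t. 1) * P Wd S (\<lambda>t. w t * w t)"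
    apply (rule amgm_aux)
    using assms by (auto intro!: P_nonneg CS)
  then show ?thesis unfolding H_def by simp
qed

lemma H_CS:
  assumes W: "\<And>t. Wa t \<ge> 0" "\<And>t. Wd t \<ge> 0"
    and a: "ok Wa S (\<lambda>t. 1)" "ok Wa S u" "ok Wa S v" "ok Wa S (\<lambda>t. u t * u t)" "ok Wa S (\<lambda>t. u t * v t)" "ok Wa S (\<lambda>t. v t * v t)"
    and d: "ok Wd S (\<lambda>t. 1)" "ok Wd S u" "ok Wd S v" "ok Wd S (\<lambda>t. u t * u t)" "ok Wd S (\<lambda>t. u t * v t)" "ok Wd S (\<lambda>t. v t * v t)"
  shows "(H Wa Wd S u v)^2 \<le> H Wa Wd S u u * H Wa Wd S v v" "0 \<le> H Wa Wd S u u" "0 \<le> H Wa Wd S v v"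
proof -
  show hu: "0 \<le> H Wa Wd S u u" by (rule H_psd) (use assms in auto)
  show hv: "0 \<le> H Wa Wd S v v" by (rule H_psd) (use assms in auto)
  show "(H Wa Wd S u v)^2 \<le> H Wa Wd S u u * H Wa Wd S v v"
  proof (rule discr[OF hv])
    fix t :: real
    have "0 \<le> H Wa Wd S (\<lambda>s. u s + t * v s) (\<lambda>s. u s + t * v s)"
      by (rule H_psd) (use assms in \<open>auto intro: sq_expand lin_expand\<close>)
    also have "\<dots> = H Wa Wd S u u + 2 * H Wa Wd S u v * t + H Wa Wd S v v * t^2"
      unfolding H_def using a d
      by (simp add: sq_expand lin_expand) (simp add: power2_eq_square algebra_simps)
    finally show "0 \<le> H Wa Wd S u u + 2 * H Wa Wd S u v * t + H Wa Wd S v v * t^2" .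
  qed
qed

lemma sq_ok:
  assumes W: "\<And>t. W t \<ge> 0" and S: "S \<subseteq> {0..}"
    and ui: "set_integrable lborel {0..} u" and ou: "ok W S u"
    and o1: "ok W S (\<lambda>t. g1 t * u t)" and o2: "ok W S (\<lambda>t. g2 t * u t)" and o3: "ok W S (\<lambda>t. g1 t * g2 t)"
    and b: "\<And>t. t \<in> S \<Longrightarrow> g1 t \<le> u t \<and> u t \<le> g2 t"
  shows "ok W S (\<lambda>t. u t * u t)"
    "P W S (\<lambda>t. u t * u t) \<le> P W S (\<lambda>t. g1 t * u t) + P W S (\<lambda>t. g2 t * u t) - P W S (\<lambda>t. g1 t * g2 t)"
proof -
  define g where "g = (\<lambda>t. (g1 t * u t + g2 t * u t) + (-1) * (g1 t * g2 t))"
  have og: "ok W S g" unfolding g_def using o1 o2 o3 by (intro ok_add ok_scale)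
  have Pg: "P W S g = P W S (\<lambda>t. g1 t * u t) + P W S (\<lambda>t. g2 t * u t) - P W S (\<lambda>t. g1 t * g2 t)"
  proof -
    have "P W S g = P W S (\<lambda>t. g1 t * u t + g2 t * u t) + P W S (\<lambda>t. (-1) * (g1 t * g2 t))"
      unfolding g_def by (rule P_add[OF ok_add[OF o1 o2] ok_scale[OF o3]])
    also have "\<dots> = P W S (\<lambda>t. g1 t * u t) + P W S (\<lambda>t. g2 t * u t) - P W S (\<lambda>t. g1 t * g2 t)"
      by (simp only: P_add[OF o1 o2] P_scale)
    finally show ?thesis .
  qed
  have le: "u t * u t \<le> g t" if "t \<in> S" for t
  proof -
    have "0 \<le> (g2 t - u t) * (u t - g1 t)" using b[OF that] by simp
    then show ?thesis unfolding g_def by (simp add: algebra_simps)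
  qed
  have m1: "(\<lambda>t. indicator S t *\<^sub>R (W t * u t)) \<in> borel_measurable lborel"
    using ou unfolding ok_def set_integrable_def by blast
  have m2: "(\<lambda>t. indicator {0..} t *\<^sub>R u t) \<in> borel_measurable lborel"
    using ui unfolding set_integrable_def by blast
  have eqm: "(\<lambda>t. indicator S t *\<^sub>R (W t * (u t * u t))) = (\<lambda>t. (indicator S t *\<^sub>R (W t * u t)) * (indicator {0..} t *\<^sub>R u t))"
    using S by (auto simp: indicator_def fun_eq_iff)
  have m: "(\<lambda>t. indicator S t *\<^sub>R (W t * (u t * u t))) \<in> borel_measurable lborel"
    unfolding eqm using m1 m2 by measurable
  show ouu: "ok W S (\<lambda>t. u t * u t)"
    unfolding ok_def set_integrable_def
  proof (rule Bochner_Integration.integrable_bound)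
    show "integrable lborel (\<lambda>t. indicator S t *\<^sub>R (W t * g t))"
      using og unfolding ok_def set_integrable_def .
    show "(\<lambda>t. indicator S t *\<^sub>R (W t * (u t * u t))) \<in> borel_measurable lborel" by (rule m)
    show "AE t in lborel. norm (indicator S t *\<^sub>R (W t * (u t * u t))) \<le> norm (indicator S t *\<^sub>R (W t * g t))"
    proof (rule AE_I2)
      fix t
      show "norm (indicator S t *\<^sub>R (W t * (u t * u t))) \<le> norm (indicator S t *\<^sub>R (W t * g t))"
      proof (cases "t \<in> S")
        case True
        have "0 \<le> u t * u t" by simp
        moreover have "u t * u t \<le> g t" using le[OF True] .
        ultimately have "\<bar>W t * (u t * u t)\<bar> \<le> \<bar>W t * g t\<bar>"
          using W[of t] by (simp add: abs_mult mult_left_mono)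
        then show ?thesis using True by simp
      qed simp
    qed
  qed
  have "P W S (\<lambda>t. u t * u t) \<le> P W S g" by (rule P_mono[OF W ouu og le])
  then show "P W S (\<lambda>t. u t * u t) \<le> P W S (\<lambda>t. g1 t * u t) + P W S (\<lambda>t. g2 t * u t) - P W S (\<lambda>t. g1 t * g2 t)"
    using Pg by simp
qed



lemma eta_gt:
  fixes \<eta> \<alpha> :: real
  assumes a: "\<alpha> > 0" and int: "(\<lambda>s. s powr \<eta> * (1 - s) powr (\<alpha> - 1)) integrable_on {0<..<1}"
  shows "\<eta> > -1"
proof (rule ccontr)
  assume "\<not> \<eta> > -1"
  then have e: "\<eta> \<le> -1" by simp
  define B where "B = (\<lambda>s::real. s powr \<eta> * (1 - s) powr (\<alpha> - 1))"
  define c0 where "c0 = (1/2::real) powr \<bar>\<alpha> - 1\<bar>"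
  have c0: "c0 > 0" unfolding c0_def by simp
  define M where "M = integral {0<..<1} B"
  have Bnn: "\<And>s. 0 \<le> B s" unfolding B_def by simp
  have lowB: "c0 / s \<le> B s" if s: "0 < s" "s \<le> 1/2" for s
  proof -
    have "s powr (-1) \<le> s powr \<eta>" using s e by (intro powr_mono') auto
    then have 1: "1 / s \<le> s powr \<eta>" using s by (simp add: powr_neg_one)
    have 2: "c0 \<le> (1 - s) powr (\<alpha> - 1)"
    proof (cases "\<alpha> \<ge> 1")
      case True
      then have "c0 = (1/2) powr (\<alpha> - 1)" unfolding c0_def by simp
      also have "\<dots> \<le> (1 - s) powr (\<alpha> - 1)" using True s by (intro powr_mono2) auto
      finally show ?thesis .
    next
      case False
      have "c0 \<le> 1" unfolding c0_def by (rule powr_le1) auto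
      also have "1 \<le> (1 - s) powr (\<alpha> - 1)"
      proof -
        have "(1 - s) powr (\<alpha> - 1) = inverse ((1 - s) powr (1 - \<alpha>))"
          by (subst powr_minus[symmetric]) simp
        moreover have "(1 - s) powr (1 - \<alpha>) \<le> 1" using False s by (intro powr_le1) auto
        moreover have "(1 - s) powr (1 - \<alpha>) > 0" using s by simp
        ultimately show ?thesis by (metis one_le_inverse)
      qed
      finally show ?thesis .
    qed
    have "c0 / s = (1 / s) * c0" by simp
    also have "\<dots> \<le> s powr \<eta> * (1 - s) powr (\<alpha> - 1)"
      using 1 2 c0 s by (intro mult_mono) auto
    finally show ?thesis unfolding B_def .
  qed
  have bound: "c0 * (ln (1/2) - ln \<epsilon>) \<le> M" if ep: "0 < \<epsilon>" "\<epsilon> < 1/2" for \<epsilon>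
  proof -
    have ftc: "((\<lambda>s. c0 / s) has_integral (c0 * ln (1/2) - c0 * ln \<epsilon>)) {\<epsilon>..1/2}"
    proof -
      have "((\<lambda>s. c0 / s) has_integral ((\<lambda>s. c0 * ln s) (1/2) - (\<lambda>s. c0 * ln s) \<epsilon>)) {\<epsilon>..1/2}"
      proof (rule fundamental_theorem_of_calculus)
        show "\<epsilon> \<le> 1/2" using ep by simp
        fix s assume "s \<in> {\<epsilon>..1/2}"
        then have s: "s > 0" using ep by auto
        have "((\<lambda>s. c0 * ln s) has_real_derivative c0 * (1/s)) (at s)"
          by (intro DERIV_cmult DERIV_ln_divide s)
        then show "((\<lambda>s. c0 * ln s) has_vector_derivative c0 / s) (at s within {\<epsilon>..1/2})"
          by (simp add: has_real_derivative_iff_has_vector_derivative[symmetric] has_field_derivative_at_within)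
      qed
      then show ?thesis by simp
    qed
    have contB: "continuous_on {\<epsilon>..1/2} B"
      unfolding B_def using ep by (intro continuous_intros) auto
    have iB: "B integrable_on {\<epsilon>..1/2}" by (rule integrable_continuous_interval[OF contB])
    have "c0 * ln (1/2) - c0 * ln \<epsilon> \<le> integral {\<epsilon>..1/2} B"
      by (rule has_integral_le[OF ftc integrable_integral[OF iB]]) (use lowB ep in auto)
    also have "\<dots> \<le> M" unfolding M_def
      by (rule integral_subset_le) (use ep iB int Bnn in \<open>auto simp: B_def\<close>)
    finally show ?thesis by (simp add: algebra_simps)
  qed
  define \<epsilon> where "\<epsilon> = min (1/4) (exp (-(\<bar>M\<bar>/c0 + 1)))"
  have ep: "0 < \<epsilon>" "\<epsilon> < 1/2" unfolding \<epsilon>_def by auto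
  have "ln \<epsilon> \<le> ln (exp (-(\<bar>M\<bar>/c0 + 1)))" using ep unfolding \<epsilon>_def by (subst ln_le_cancel_iff) auto
  then have l: "ln \<epsilon> \<le> -(\<bar>M\<bar>/c0 + 1)" by simp
  have l2: "ln (1/2::real) > -1" using ln_2_less_1 by (simp add: ln_div)
  have "\<bar>M\<bar> / c0 < ln (1/2) - ln \<epsilon>" using l l2 by linarith
  then have "\<bar>M\<bar> < c0 * (ln (1/2) - ln \<epsilon>)" using c0 by (simp add: field_simps)
  with bound[OF ep] show False by linarith
qed



lemma key_id:
  fixes x \<rho> \<alpha> \<eta> s :: real
  assumes x: "x > 0" and r: "\<rho> > 0" and s: "0 < s" "s < 1"
  shows "\<bar>x * ((1/\<rho>) * s powr (1/\<rho> - 1))\<bar> * kat_kernel \<rho> \<alpha> \<eta> x (x * s powr (1/\<rho>))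
     = x powr (\<rho>*(\<eta>+\<alpha>)) / \<rho> * (s powr \<eta> * (1 - s) powr (\<alpha> - 1))"
proof -
  have gp: "(x * s powr (1/\<rho>)) powr \<rho> = x powr \<rho> * s"
    using x s r by (simp add: powr_mult powr_powr)
  have d: "x powr \<rho> - x powr \<rho> * s = x powr \<rho> * (1 - s)" by (simp add: algebra_simps)
  have pos: "x powr \<rho> * (1 - s) > 0" using x s by simp
  have "\<bar>x * ((1/\<rho>) * s powr (1/\<rho> - 1))\<bar> = x * ((1/\<rho>) * s powr (1/\<rho> - 1))"
    using x r s by simp
  then have "\<bar>x * ((1/\<rho>) * s powr (1/\<rho> - 1))\<bar> * kat_kernel \<rho> \<alpha> \<eta> x (x * s powr (1/\<rho>))
     = x * ((1/\<rho>) * s powr (1/\<rho> - 1)) * ((x * s powr (1/\<rho>)) powr (\<rho> * (\<eta> + 1) - 1) / (x powr \<rho> * (1 - s)) powr (1 - \<alpha>))"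
    unfolding kat_kernel_def gp d by simp
  also have "\<dots> = exp (ln x) * ((1/\<rho>) * exp ((1/\<rho> - 1) * ln s)) * (exp ((\<rho> * (\<eta> + 1) - 1) * (ln x + (1/\<rho>) * ln s)) / exp ((1 - \<alpha>) * (\<rho> * ln x + ln (1 - s))))"
    using x s pos by (simp add: powr_def ln_mult)
  also have "\<dots> = exp (\<rho>*(\<eta>+\<alpha>) * ln x) / \<rho> * (exp (\<eta> * ln s) * exp ((\<alpha> - 1) * ln (1 - s)))"
    using r by (simp add: exp_add[symmetric] exp_diff[symmetric] field_simps del: exp_ln)
  also have "\<dots> = x powr (\<rho>*(\<eta>+\<alpha>)) / \<rho> * (s powr \<eta> * (1 - s) powr (\<alpha> - 1))"
    using x s by (simp add: powr_def)
  finally show ?thesis .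
qed

lemma kernel_int:
  fixes x \<rho> \<alpha> \<eta> :: real
  assumes x: "x > 0" and r: "\<rho> > 0" and a: "\<alpha> > 0"
    and si: "set_integrable lborel {0<..<x} (\<lambda>\<tau>. kat_kernel \<rho> \<alpha> \<eta> x \<tau> * 1)"
  shows "\<eta> > -1" "(LINT \<tau>:{0<..<x}|lborel. kat_kernel \<rho> \<alpha> \<eta> x \<tau> * 1) = x powr (\<rho>*(\<eta>+\<alpha>)) / \<rho> * Beta (\<eta>+1) \<alpha>"
proof -
  define K where "K = kat_kernel \<rho> \<alpha> \<eta> x"
  have si': "set_integrable lborel {0<..<x} K" using si unfolding K_def by simp
  have Kint: "K integrable_on {0<..<x}" and Leq: "(LINT \<tau>:{0<..<x}|lborel. K \<tau>) = integral {0<..<x} K"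
    using set_borel_integral_eq_integral[OF si'] by auto
  have Knn: "\<And>t. 0 \<le> K t" unfolding K_def kat_kernel_def by simp
  have absK: "K absolutely_integrable_on {0<..<x}"
    by (rule nonnegative_absolutely_integrable_1[OF Kint Knn])
  define g where "g = (\<lambda>s::real. x * s powr (1/\<rho>))"
  define g' where "g' = (\<lambda>s::real. x * ((1/\<rho>) * s powr (1/\<rho> - 1)))"
  define S where "S = {0<..<(1::real)}"
  have img: "g ` S = {0<..<x}"
  proof
    show "g ` S \<subseteq> {0<..<x}"
    proof
      fix t assume "t \<in> g ` S"
      then obtain s where s: "0 < s" "s < 1" and t: "t = g s" unfolding S_def by auto
      have "s powr (1/\<rho>) < 1 powr (1/\<rho>)" using s r by (intro powr_less_mono2) auto
      then have "s powr (1/\<rho>) < 1" by simp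
      then show "t \<in> {0<..<x}" using s x unfolding t g_def by auto
    qed
    show "{0<..<x} \<subseteq> g ` S"
    proof
      fix t assume t: "t \<in> {0<..<x}"
      define s where "s = (t/x) powr \<rho>"
      have "(t/x) powr \<rho> < 1 powr \<rho>" using t r x by (intro powr_less_mono2) auto
      then have "s \<in> S" unfolding S_def s_def using t x by auto
      moreover have "g s = t" unfolding g_def s_def using t x r by (simp add: powr_powr)
      ultimately show "t \<in> g ` S" by force
    qed
  qed
  have der: "(g has_field_derivative g' s) (at s within S)" if "s \<in> S" for s
  proof -
    have "s > 0" using that unfolding S_def by auto
    then have "((\<lambda>s. s powr (1/\<rho>)) has_real_derivative (1/\<rho>) * s powr (1/\<rho> - 1)) (at s)"
      by (rule has_real_derivative_powr)
    then have "(g has_real_derivative g' s) (at s)" unfolding g_def g'_def by (rule DERIV_cmult)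
    then show ?thesis by (rule has_field_derivative_at_within)
  qed
  have inj: "inj_on g S"
  proof
    fix s t assume st: "s \<in> S" "t \<in> S" "g s = g t"
    then have "s powr (1/\<rho>) = t powr (1/\<rho>)" using x unfolding g_def by simp
    then have "(s powr (1/\<rho>)) powr \<rho> = (t powr (1/\<rho>)) powr \<rho>" by simp
    then show "s = t" using st r unfolding S_def by (simp add: powr_powr)
  qed
  define b where "b = integral {0<..<x} K"
  define C where "C = x powr (\<rho>*(\<eta>+\<alpha>)) / \<rho>"
  have C: "C > 0" unfolding C_def using x r by simp
  define Bf where "Bf = (\<lambda>s::real. s powr \<eta> * (1 - s) powr (\<alpha> - 1))"
  have cv: "(\<lambda>s. \<bar>g' s\<bar> * K (g s)) absolutely_integrable_on S \<and> integral S (\<lambda>s. \<bar>g' s\<bar> * K (g s)) = b"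
    using has_absolute_integral_change_of_variables_1'[of S g g' K b, OF _ der inj] absK img
    unfolding b_def S_def by auto
  have hid: "\<bar>g' s\<bar> * K (g s) = C * Bf s" if "s \<in> S" for s
    using key_id[OF x r, of s \<alpha> \<eta>] that unfolding S_def g'_def g_def K_def C_def Bf_def by auto
  have hint: "(\<lambda>s. \<bar>g' s\<bar> * K (g s)) integrable_on S"
    using cv absolutely_integrable_on_def by blast
  have "(\<lambda>s. (1/C) * (\<bar>g' s\<bar> * K (g s))) integrable_on S"
    using integrable_cmul[OF hint, of "1/C"] by simp
  then have Bint: "Bf integrable_on S"
    by (rule integrable_eq) (use hid C in auto)
  show eta: "\<eta> > -1" by (rule eta_gt[OF a]) (use Bint in \<open>simp add: Bf_def S_def\<close>)
  have "((\<lambda>t. t powr (\<eta> + 1 - 1) * (1 - t) powr (\<alpha> - 1)) has_integral Beta (\<eta> + 1) \<alpha>) {0..1}"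
    using has_integral_Beta_real[of "\<eta>+1" \<alpha>] eta a by simp
  then have "(Bf has_integral Beta (\<eta> + 1) \<alpha>) S"
    unfolding S_def Bf_def by (simp add: has_integral_Icc_iff_Ioo)
  then have "((\<lambda>s. C * Bf s) has_integral C * Beta (\<eta> + 1) \<alpha>) S"
    using has_integral_mult_right by blast
  then have "((\<lambda>s. \<bar>g' s\<bar> * K (g s)) has_integral C * Beta (\<eta> + 1) \<alpha>) S"
    by (rule has_integral_eq[rotated]) (use hid in auto)
  then have "b = C * Beta (\<eta> + 1) \<alpha>" using cv integral_unique by metis
  then show "(LINT \<tau>:{0<..<x}|lborel. kat_kernel \<rho> \<alpha> \<eta> x \<tau> * 1) = x powr (\<rho>*(\<eta>+\<alpha>)) / \<rho> * Beta (\<eta>+1) \<alpha>"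
    using Leq unfolding b_def C_def K_def by simp
qed



theorem theorem3:
  fixes v u z1 z2 \<gamma>1 \<gamma>2 :: "real \<Rightarrow> real"
    and x \<alpha> \<delta> \<rho> \<beta> lam \<eta> k :: real
  assumes int_fun: "set_integrable lborel {0..} v" "set_integrable lborel {0..} u"
      "set_integrable lborel {0..} z1" "set_integrable lborel {0..} z2"
      "set_integrable lborel {0..} \<gamma>1" "set_integrable lborel {0..} \<gamma>2"
    and bounds_v: "\<And>t. t \<ge> 0 \<Longrightarrow> z1 t \<le> v t \<and> v t \<le> z2 t"
    and bounds_u: "\<And>t. t \<ge> 0 \<Longrightarrow> \<gamma>1 t \<le> u t \<and> u t \<le> \<gamma>2 t"
    and pos: "x > 0" "\<alpha> > 0" "\<delta> > 0" "\<rho> > 0"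
    and exists: "\<And>a f. a \<in> {\<alpha>, \<delta>} \<Longrightarrow>
        f \<in> {(\<lambda>t. 1), u, v, (\<lambda>t. u t * v t), (\<lambda>t. v t * u t),
              z1, z2, (\<lambda>t. z1 t * v t), (\<lambda>t. z2 t * v t), (\<lambda>t. z1 t * z2 t),
              \<gamma>1, \<gamma>2, (\<lambda>t. \<gamma>1 t * u t), (\<lambda>t. \<gamma>2 t * u t), (\<lambda>t. \<gamma>1 t * \<gamma>2 t)} \<Longrightarrow>
        kat_exists \<rho> a \<eta> f x"
  shows "\<bar>kat_Lambda \<rho> lam x k \<delta> \<eta> * kat_J \<rho> \<alpha> \<beta> \<eta> k (\<lambda>t. u t * v t) x
          + kat_Lambda \<rho> \<beta> x k \<alpha> \<eta> * kat_J \<rho> \<delta> lam \<eta> k (\<lambda>t. v t * u t) x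
          - kat_J \<rho> \<delta> lam \<eta> k u x * kat_J \<rho> \<alpha> \<beta> \<eta> k v x
          - kat_J \<rho> \<delta> lam \<eta> k v x * kat_J \<rho> \<alpha> \<beta> \<eta> k u x\<bar>
     \<le> sqrt (kat_K (\<lambda>f. kat_J \<rho> \<alpha> \<beta> \<eta> k f x) (\<lambda>f. kat_J \<rho> \<delta> lam \<eta> k f x)
                 (kat_Lambda \<rho> \<beta> x k \<alpha> \<eta>) (kat_Lambda \<rho> lam x k \<delta> \<eta>) v z1 z2
             * kat_K (\<lambda>f. kat_J \<rho> \<alpha> \<beta> \<eta> k f x) (\<lambda>f. kat_J \<rho> \<delta> lam \<eta> k f x)
                 (kat_Lambda \<rho> \<beta> x k \<alpha> \<eta>) (kat_Lambda \<rho> lam x k \<delta> \<eta>) u \<gamma>1 \<gamma>2)"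
proof -
  define S where "S = {0<..<x}"
  have S0: "S \<subseteq> {0..}" unfolding S_def by auto
  have gen: "\<exists>W. (\<forall>t. W t \<ge> 0) \<and> (\<forall>f. kat_J \<rho> a b \<eta> k f x = P W S f)
      \<and> (\<forall>f. kat_exists \<rho> a \<eta> f x \<longrightarrow> ok W S f)
      \<and> (kat_exists \<rho> a \<eta> (\<lambda>t. 1) x \<longrightarrow> P W S (\<lambda>t. 1) = kat_Lambda \<rho> b x k a \<eta>)"
    if a: "a > 0" for a b
  proof -
    define C where "C = \<rho> powr (1 - b) * x powr k / Gamma a"
    have C: "C > 0" unfolding C_def using pos a Gamma_real_pos[OF a] by simp
    define W where "W = (\<lambda>t. C * kat_kernel \<rho> a \<eta> x t)"
    have W: "\<forall>t. W t \<ge> 0" unfolding W_def kat_kernel_def using C by simp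
    have J: "\<forall>f. kat_J \<rho> a b \<eta> k f x = P W S f"
      unfolding kat_J_def P_def W_def S_def C_def by (simp add: mult.assoc)
    have O: "\<forall>f. kat_exists \<rho> a \<eta> f x \<longrightarrow> ok W S f"
      unfolding kat_exists_def ok_def W_def S_def by (simp add: mult.assoc)
    have L: "P W S (\<lambda>t. 1) = kat_Lambda \<rho> b x k a \<eta>" if e: "kat_exists \<rho> a \<eta> (\<lambda>t. 1) x"
    proof -
      have si: "set_integrable lborel {0<..<x} (\<lambda>\<tau>. kat_kernel \<rho> a \<eta> x \<tau> * 1)"
        using e unfolding kat_exists_def .
      note ki = kernel_int[OF pos(1) pos(4) a si]
      have g1: "Gamma (\<eta> + 1) > 0" using ki(1) by (intro Gamma_real_pos) simp
      have ga: "Gamma a > 0" using Gamma_real_pos[OF a] .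
      have "P W S (\<lambda>t. 1) = C * (LINT \<tau>:{0<..<x}|lborel. kat_kernel \<rho> a \<eta> x \<tau> * 1)"
        unfolding P_def W_def S_def by (simp add: mult.assoc)
      also have "\<dots> = C * (x powr (\<rho>*(\<eta>+a)) / \<rho> * Beta (\<eta>+1) a)" using ki(2) by simp
      also have "\<dots> = Gamma (\<eta> + 1) / Gamma (\<eta> + a + 1) * (\<rho> powr (1 - b) / \<rho>) * (x powr k * x powr (\<rho> * (\<eta> + a)))"
        unfolding C_def Beta_def using ga by (simp add: field_simps add_ac)
      also have "\<rho> powr (1 - b) / \<rho> = \<rho> powr (- b)"
        using pos(4) by (simp add: powr_diff powr_minus_divide)
      also have "x powr k * x powr (\<rho> * (\<eta> + a)) = x powr (k + \<rho> * (\<eta> + a))"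
        by (simp add: powr_add)
      finally show ?thesis unfolding kat_Lambda_def by (simp add: mult.assoc)
    qed
    show ?thesis using W J O L by blast
  qed
  obtain Wa where Wa: "\<And>t. Wa t \<ge> 0" "\<And>f. kat_J \<rho> \<alpha> \<beta> \<eta> k f x = P Wa S f"
      "\<And>f. kat_exists \<rho> \<alpha> \<eta> f x \<Longrightarrow> ok Wa S f"
      "kat_exists \<rho> \<alpha> \<eta> (\<lambda>t. 1) x \<Longrightarrow> P Wa S (\<lambda>t. 1) = kat_Lambda \<rho> \<beta> x k \<alpha> \<eta>"
    using gen[OF pos(2), of \<beta>] by blast
  obtain Wd where Wd: "\<And>t. Wd t \<ge> 0" "\<And>f. kat_J \<rho> \<delta> lam \<eta> k f x = P Wd S f"
      "\<And>f. kat_exists \<rho> \<delta> \<eta> f x \<Longrightarrow> ok Wd S f"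
      "kat_exists \<rho> \<delta> \<eta> (\<lambda>t. 1) x \<Longrightarrow> P Wd S (\<lambda>t. 1) = kat_Lambda \<rho> lam x k \<delta> \<eta>"
    using gen[OF pos(3), of lam] by blast
  have exA: "kat_exists \<rho> \<alpha> \<eta> f x" if "f \<in> {(\<lambda>t. 1), u, v, (\<lambda>t. u t * v t), (\<lambda>t. v t * u t),
              z1, z2, (\<lambda>t. z1 t * v t), (\<lambda>t. z2 t * v t), (\<lambda>t. z1 t * z2 t),
              \<gamma>1, \<gamma>2, (\<lambda>t. \<gamma>1 t * u t), (\<lambda>t. \<gamma>2 t * u t), (\<lambda>t. \<gamma>1 t * \<gamma>2 t)}" for f
    using exists[of \<alpha> f] that by simp
  have exD: "kat_exists \<rho> \<delta> \<eta> f x" if "f \<in> {(\<lambda>t. 1), u, v, (\<lambda>t. u t * v t), (\<lambda>t. v t * u t),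
              z1, z2, (\<lambda>t. z1 t * v t), (\<lambda>t. z2 t * v t), (\<lambda>t. z1 t * z2 t),
              \<gamma>1, \<gamma>2, (\<lambda>t. \<gamma>1 t * u t), (\<lambda>t. \<gamma>2 t * u t), (\<lambda>t. \<gamma>1 t * \<gamma>2 t)}" for f
    using exists[of \<delta> f] that by simp
  have L1: "P Wa S (\<lambda>t. 1) = kat_Lambda \<rho> \<beta> x k \<alpha> \<eta>" by (rule Wa(4), rule exA) simp
  have L2: "P Wd S (\<lambda>t. 1) = kat_Lambda \<rho> lam x k \<delta> \<eta>" by (rule Wd(4), rule exD) simp
  have oA1: "ok Wa S (\<lambda>t. 1)" and oAu: "ok Wa S u" and oAv: "ok Wa S v" and oAuv: "ok Wa S (\<lambda>t. u t * v t)"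
    and oAz1: "ok Wa S (\<lambda>t. z1 t * v t)" and oAz2: "ok Wa S (\<lambda>t. z2 t * v t)" and oAz: "ok Wa S (\<lambda>t. z1 t * z2 t)"
    and oAg1: "ok Wa S (\<lambda>t. \<gamma>1 t * u t)" and oAg2: "ok Wa S (\<lambda>t. \<gamma>2 t * u t)" and oAg: "ok Wa S (\<lambda>t. \<gamma>1 t * \<gamma>2 t)"
    by (rule Wa(3), rule exA, simp)+
  have oD1: "ok Wd S (\<lambda>t. 1)" and oDu: "ok Wd S u" and oDv: "ok Wd S v" and oDuv: "ok Wd S (\<lambda>t. u t * v t)"
    and oDz1: "ok Wd S (\<lambda>t. z1 t * v t)" and oDz2: "ok Wd S (\<lambda>t. z2 t * v t)" and oDz: "ok Wd S (\<lambda>t. z1 t * z2 t)"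
    and oDg1: "ok Wd S (\<lambda>t. \<gamma>1 t * u t)" and oDg2: "ok Wd S (\<lambda>t. \<gamma>2 t * u t)" and oDg: "ok Wd S (\<lambda>t. \<gamma>1 t * \<gamma>2 t)"
    by (rule Wd(3), rule exD, simp)+
  have bu: "\<And>t. t \<in> S \<Longrightarrow> \<gamma>1 t \<le> u t \<and> u t \<le> \<gamma>2 t" using bounds_u S0 by auto
  have bv: "\<And>t. t \<in> S \<Longrightarrow> z1 t \<le> v t \<and> v t \<le> z2 t" using bounds_v S0 by auto
  note sAu = sq_ok[OF Wa(1) S0 int_fun(2) oAu oAg1 oAg2 oAg bu]
  note sDu = sq_ok[OF Wd(1) S0 int_fun(2) oDu oDg1 oDg2 oDg bu]
  note sAv = sq_ok[OF Wa(1) S0 int_fun(1) oAv oAz1 oAz2 oAz bv]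
  note sDv = sq_ok[OF Wd(1) S0 int_fun(1) oDv oDz1 oDz2 oDz bv]
  note hcs = H_CS[OF Wa(1) Wd(1) oA1 oAu oAv sAu(1) oAuv sAv(1) oD1 oDu oDv sDu(1) oDuv sDv(1)]
  have La: "0 \<le> P Wa S (\<lambda>t. 1)" by (rule P_nonneg[OF Wa(1)]) simp
  have Ld: "0 \<le> P Wd S (\<lambda>t. 1)" by (rule P_nonneg[OF Wd(1)]) simp
  define A where "A = P Wa S"
  define D where "D = P Wd S"
  have fA: "(\<lambda>f. kat_J \<rho> \<alpha> \<beta> \<eta> k f x) = A" unfolding A_def using Wa(2) by auto
  have fD: "(\<lambda>f. kat_J \<rho> \<delta> lam \<eta> k f x) = D" unfolding D_def using Wd(2) by auto
  have Dvu: "D (\<lambda>t. v t * u t) = D (\<lambda>t. u t * v t)" unfolding D_def by (rule P_cong) simp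
  have Ku: "H Wa Wd S u u \<le> kat_K A D (kat_Lambda \<rho> \<beta> x k \<alpha> \<eta>) (kat_Lambda \<rho> lam x k \<delta> \<eta>) u \<gamma>1 \<gamma>2"
  proof -
    have "P Wd S (\<lambda>t. 1) * P Wa S (\<lambda>t. u t * u t) \<le> P Wd S (\<lambda>t. 1) * (P Wa S (\<lambda>t. \<gamma>1 t * u t) + P Wa S (\<lambda>t. \<gamma>2 t * u t) - P Wa S (\<lambda>t. \<gamma>1 t * \<gamma>2 t))"
      using sAu(2) Ld by (rule mult_left_mono)
    moreover have "P Wa S (\<lambda>t. 1) * P Wd S (\<lambda>t. u t * u t) \<le> P Wa S (\<lambda>t. 1) * (P Wd S (\<lambda>t. \<gamma>1 t * u t) + P Wd S (\<lambda>t. \<gamma>2 t * u t) - P Wd S (\<lambda>t. \<gamma>1 t * \<gamma>2 t))"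
      using sDu(2) La by (rule mult_left_mono)
    ultimately show ?thesis unfolding H_def kat_K_def A_def D_def L1[symmetric] L2[symmetric]
      by (simp add: algebra_simps)
  qed
  have Kv: "H Wa Wd S v v \<le> kat_K A D (kat_Lambda \<rho> \<beta> x k \<alpha> \<eta>) (kat_Lambda \<rho> lam x k \<delta> \<eta>) v z1 z2"
  proof -
    have "P Wd S (\<lambda>t. 1) * P Wa S (\<lambda>t. v t * v t) \<le> P Wd S (\<lambda>t. 1) * (P Wa S (\<lambda>t. z1 t * v t) + P Wa S (\<lambda>t. z2 t * v t) - P Wa S (\<lambda>t. z1 t * z2 t))"
      using sAv(2) Ld by (rule mult_left_mono)
    moreover have "P Wa S (\<lambda>t. 1) * P Wd S (\<lambda>t. v t * v t) \<le> P Wa S (\<lambda>t. 1) * (P Wd S (\<lambda>t. z1 t * v t) + P Wd S (\<lambda>t. z2 t * v t) - P Wd S (\<lambda>t. z1 t * z2 t))"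
      using sDv(2) La by (rule mult_left_mono)
    ultimately show ?thesis unfolding H_def kat_K_def A_def D_def L1[symmetric] L2[symmetric]
      by (simp add: algebra_simps)
  qed
  have lhs: "kat_Lambda \<rho> lam x k \<delta> \<eta> * A (\<lambda>t. u t * v t)
          + kat_Lambda \<rho> \<beta> x k \<alpha> \<eta> * D (\<lambda>t. v t * u t)
          - D u * A v - D v * A u = H Wa Wd S u v"
    unfolding H_def Dvu unfolding A_def D_def L1 L2 ..
  have "\<bar>H Wa Wd S u v\<bar> = sqrt ((H Wa Wd S u v)^2)" by simp
  also have "\<dots> \<le> sqrt (H Wa Wd S u u * H Wa Wd S v v)" using hcs(1) by (rule real_sqrt_le_mono)
  also have "\<dots> \<le> sqrt (kat_K A D (kat_Lambda \<rho> \<beta> x k \<alpha> \<eta>) (kat_Lambda \<rho> lam x k \<delta> \<eta>) v z1 z2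
           * kat_K A D (kat_Lambda \<rho> \<beta> x k \<alpha> \<eta>) (kat_Lambda \<rho> lam x k \<delta> \<eta>) u \<gamma>1 \<gamma>2)"
    using Ku Kv hcs(2,3) by (intro real_sqrt_le_mono) (simp add: mult.commute mult_mono)
  finally show ?thesis unfolding fA fD using lhs Wa(2) Wd(2) unfolding A_def D_def by simp
qed


end
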